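(* Let $F:\mathcal{P}(V,A)\to S_2(A)$ be a consular election rule satisfying SPP and SPO. Then $F$ is reducible if and only if its range graph $\mathcal{G}(F)$ is bipartite.
   Context: $V$ is a finite nonempty set of voters, $A$ a finite set of alternatives; a profile $P$ assigns to each voter $i$ a linear order $P_i$ on $A$; $P_i'P_{-i}$ replaces voter $i$'s order by $P_i'$; $P|_B$ is the profile of restrictions to $B\subseteq A$. $S_2(A)$ is the set of 2-element subsets of $A$; a consular election rule is a map $F:\mathcal{P}(V,A)\to S_2(A)$. SPO: for all $P$, $i$, $P_i'$, $\mathrm{best}(P_i,F(P))\succeq_i\mathrm{best}(P_i,F(P_i'P_{-i}))$; SPP: same with $\mathrm{worst}$, where $\mathrm{best}(P_i,W)$, $\mathrm{worst}(P_i,W)$ are the $P_i$-best and $P_i$-worst elements of $W$. $F$ is reducible if there is a partition $A=B\uplus C$ and social choice functions $G:\mathcal{P}(V,B)\to B$, $H:\mathcal{P}(V,C)\to C$ with $F(P)=\{G(P|_B),H(P|_C)\}$ for all $P$. The range graph $\mathcal{G}(F)$ has vertex set $A$ and edge set equal to the range of $F$. *)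

theory Defs
  imports Main
begin

text \<open>Preferences: a linear order on a set A is a relation R with
  linear_order_on A R (reflexive, antisymmetric, transitive, total on A);
  the pair (x,y) in R means x is weakly preferred to y (x is ranked at least as high as y).\<close>

definition profiles :: "'v set \<Rightarrow> 'a set \<Rightarrow> ('v \<Rightarrow> 'a rel) set" where
  "profiles V A = {P. (\<forall>i\<in>V. linear_order_on A (P i)) \<and> (\<forall>i. i \<notin> V \<longrightarrow> P i = {})}"

definition restrict_profile :: "('v \<Rightarrow> 'a rel) \<Rightarrow> 'a set \<Rightarrow> ('v \<Rightarrow> 'a rel)" where
  "restrict_profile P B = (\<lambda>i. P i \<inter> (B \<times> B))"

definition S2 :: "'a set \<Rightarrow> 'a set set" where
  "S2 A = {W. W \<subseteq> A \<and> card W = 2}"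

definition consular_rule :: "'v set \<Rightarrow> 'a set \<Rightarrow> (('v \<Rightarrow> 'a rel) \<Rightarrow> 'a set) \<Rightarrow> bool" where
  "consular_rule V A F = (\<forall>P\<in>profiles V A. F P \<in> S2 A)"

definition best :: "'a rel \<Rightarrow> 'a set \<Rightarrow> 'a" where
  "best R W = (THE x. x \<in> W \<and> (\<forall>y\<in>W. (x, y) \<in> R))"

definition worst :: "'a rel \<Rightarrow> 'a set \<Rightarrow> 'a" where
  "worst R W = (THE x. x \<in> W \<and> (\<forall>y\<in>W. (y, x) \<in> R))"

definition SPO :: "'v set \<Rightarrow> 'a set \<Rightarrow> (('v \<Rightarrow> 'a rel) \<Rightarrow> 'a set) \<Rightarrow> bool" where
  "SPO V A F = (\<forall>P\<in>profiles V A. \<forall>i\<in>V. \<forall>Pi'. linear_order_on A Pi' \<longrightarrow>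
      (best (P i) (F P), best (P i) (F (P(i := Pi')))) \<in> P i)"

definition SPP :: "'v set \<Rightarrow> 'a set \<Rightarrow> (('v \<Rightarrow> 'a rel) \<Rightarrow> 'a set) \<Rightarrow> bool" where
  "SPP V A F = (\<forall>P\<in>profiles V A. \<forall>i\<in>V. \<forall>Pi'. linear_order_on A Pi' \<longrightarrow>
      (worst (P i) (F P), worst (P i) (F (P(i := Pi')))) \<in> P i)"

definition reducible :: "'v set \<Rightarrow> 'a set \<Rightarrow> (('v \<Rightarrow> 'a rel) \<Rightarrow> 'a set) \<Rightarrow> bool" where
  "reducible V A F = (\<exists>B C G H. B \<inter> C = {} \<and> B \<union> C = A \<and>
      (\<forall>P\<in>profiles V B. G P \<in> B) \<and> (\<forall>P\<in>profiles V C. H P \<in> C) \<and>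
      (\<forall>P\<in>profiles V A. F P = {G (restrict_profile P B), H (restrict_profile P C)}))"

definition range_edges :: "'v set \<Rightarrow> 'a set \<Rightarrow> (('v \<Rightarrow> 'a rel) \<Rightarrow> 'a set) \<Rightarrow> 'a set set" where
  "range_edges V A F = F ` profiles V A"

definition bipartite :: "'a set \<Rightarrow> 'a set set \<Rightarrow> bool" where
  "bipartite Vs E = (\<exists>X Y. X \<inter> Y = {} \<and> X \<union> Y = Vs \<and>
      (\<forall>e\<in>E. \<exists>x\<in>X. \<exists>y\<in>Y. e = {x, y}))"

end

theory Submission imports Defs begin
lemma lin_facts:
  assumes "linear_order_on A R"
  shows "R \<subseteq> A \<times> A" "\<And>a. a \<in> A \<Longrightarrow> (a,a) \<in> R"
    "\<And>a b c. (a,b) \<in> R \<Longrightarrow> (b,c) \<in> R \<Longrightarrow> (a,c) \<in> R"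
    "\<And>a b. (a,b) \<in> R \<Longrightarrow> (b,a) \<in> R \<Longrightarrow> a = b"
    "\<And>a b. a \<in> A \<Longrightarrow> b \<in> A \<Longrightarrow> (a,b) \<in> R \<or> (b,a) \<in> R"
proof -
  have r: "refl_on A R" and t: "trans R" and an: "antisym R" and to: "total_on A R"
    and s: "R \<subseteq> A \<times> A"
    using assms unfolding linear_order_on_def partial_order_on_def preorder_on_def by auto
  show "R \<subseteq> A \<times> A" using s .
  show "\<And>a. a \<in> A \<Longrightarrow> (a,a) \<in> R" using r refl_onD by fast
  show "\<And>a b c. (a,b) \<in> R \<Longrightarrow> (b,c) \<in> R \<Longrightarrow> (a,c) \<in> R" using t transD by fast
  show "\<And>a b. (a,b) \<in> R \<Longrightarrow> (b,a) \<in> R \<Longrightarrow> a = b" using an antisymD by fast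
  show "\<And>a b. a \<in> A \<Longrightarrow> b \<in> A \<Longrightarrow> (a,b) \<in> R \<or> (b,a) \<in> R"
    using to unfolding total_on_def by (metis r refl_onD)
qed

lemma lin_intro:
  assumes "R \<subseteq> A \<times> A" "\<And>a. a \<in> A \<Longrightarrow> (a,a) \<in> R"
    "\<And>a b c. (a,b) \<in> R \<Longrightarrow> (b,c) \<in> R \<Longrightarrow> (a,c) \<in> R"
    "\<And>a b. (a,b) \<in> R \<Longrightarrow> (b,a) \<in> R \<Longrightarrow> a = b"
    "\<And>a b. a \<in> A \<Longrightarrow> b \<in> A \<Longrightarrow> (a,b) \<in> R \<or> (b,a) \<in> R"
  shows "linear_order_on A R"
  unfolding linear_order_on_def partial_order_on_def preorder_on_def
proof (intro conjI)
  show "R \<subseteq> A \<times> A" by fact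
  show "refl_on A R" using assms(1,2) unfolding refl_on_def by auto
  show "trans R" using assms(3) unfolding trans_def by blast
  show "antisym R" using assms(4) unfolding antisym_def by blast
  show "total_on A R" using assms(5) unfolding total_on_def by blast
qed

lemma best_pair:
  assumes "linear_order_on A R" "a \<in> A" "b \<in> A"
  shows "best R {a,b} = (if (a,b) \<in> R then a else b)"
proof -
  note L = lin_facts[OF assms(1)]
  show ?thesis
  proof (cases "(a,b) \<in> R")
    case True
    have "best R {a,b} = a" unfolding best_def
      by (rule the_equality) (use True L(2,4) assms(2) in auto)
    thus ?thesis using True by simp
  next
    case False
    hence ba: "(b,a) \<in> R" using L(5) assms by blast
    have "best R {a,b} = b" unfolding best_def
      by (rule the_equality) (use False ba L(2) assms(3) in auto)
    thus ?thesis using False by simp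
  qed
qed

lemma worst_pair:
  assumes "linear_order_on A R" "a \<in> A" "b \<in> A"
  shows "worst R {a,b} = (if (a,b) \<in> R then b else a)"
proof -
  note L = lin_facts[OF assms(1)]
  show ?thesis
  proof (cases "(a,b) \<in> R")
    case True
    have "worst R {a,b} = b" unfolding worst_def
      by (rule the_equality) (use True L(2,4) assms(3) in auto)
    thus ?thesis using True by simp
  next
    case False
    hence ba: "(b,a) \<in> R" using L(5) assms by blast
    have "worst R {a,b} = a" unfolding worst_def
      by (rule the_equality) (use False ba L(2) assms(2) in auto)
    thus ?thesis using False by simp
  qed
qed

definition liftX :: "'a set \<Rightarrow> 'a set \<Rightarrow> 'a rel \<Rightarrow> 'a rel" where
  "liftX X A R = {(a,b). (a,b)\<in>R \<and> (a\<in>X \<longleftrightarrow> b\<in>X)} \<union> {(a,b). a\<in>X \<and> b\<in>A \<and> b\<notin>X}"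

lemma liftX_lin:
  assumes "linear_order_on A R" "X \<subseteq> A"
  shows "linear_order_on A (liftX X A R)"
proof -
  note L = lin_facts[OF assms(1)]
  let ?Q = "liftX X A R"
  show ?thesis
  proof (rule lin_intro)
    show "?Q \<subseteq> A \<times> A" using L(1) assms(2) unfolding liftX_def by blast
    show "\<And>a. a \<in> A \<Longrightarrow> (a,a) \<in> ?Q" using L(2) unfolding liftX_def by blast
    show "\<And>a b c. (a,b) \<in> ?Q \<Longrightarrow> (b,c) \<in> ?Q \<Longrightarrow> (a,c) \<in> ?Q"
    proof -
      fix a b c assume ab: "(a,b) \<in> ?Q" and bc: "(b,c) \<in> ?Q"
      have ab': "(a,b) \<in> R \<and> (a\<in>X \<longleftrightarrow> b\<in>X) \<or> a\<in>X \<and> b\<in>A \<and> b\<notin>X" using ab unfolding liftX_def by blast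
      have bc': "(b,c) \<in> R \<and> (b\<in>X \<longleftrightarrow> c\<in>X) \<or> b\<in>X \<and> c\<in>A \<and> c\<notin>X" using bc unfolding liftX_def by blast
      have "(a,c) \<in> R \<and> (a\<in>X \<longleftrightarrow> c\<in>X) \<or> a\<in>X \<and> c\<in>A \<and> c\<notin>X"
      proof (rule disjE[OF ab']; rule disjE[OF bc'])
        assume h1: "(a,b) \<in> R \<and> (a\<in>X \<longleftrightarrow> b\<in>X)" and h2: "(b,c) \<in> R \<and> (b\<in>X \<longleftrightarrow> c\<in>X)"
        have "(a,c) \<in> R" using L(3) h1 h2 by blast
        thus ?thesis using h1 h2 by blast
      next
        assume h1: "(a,b) \<in> R \<and> (a\<in>X \<longleftrightarrow> b\<in>X)" and h2: "b\<in>X \<and> c\<in>A \<and> c\<notin>X"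
        thus ?thesis by blast
      next
        assume h1: "a\<in>X \<and> b\<in>A \<and> b\<notin>X" and h2: "(b,c) \<in> R \<and> (b\<in>X \<longleftrightarrow> c\<in>X)"
        have "c \<in> A" using h2 L(1) by blast
        thus ?thesis using h1 h2 by blast
      next
        assume h1: "a\<in>X \<and> b\<in>A \<and> b\<notin>X" and h2: "b\<in>X \<and> c\<in>A \<and> c\<notin>X"
        thus ?thesis by blast
      qed
      thus "(a,c) \<in> ?Q" unfolding liftX_def by blast
    qed
    show "\<And>a b. (a,b) \<in> ?Q \<Longrightarrow> (b,a) \<in> ?Q \<Longrightarrow> a = b"
      unfolding liftX_def using L(4) by blast
    show "\<And>a b. a \<in> A \<Longrightarrow> b \<in> A \<Longrightarrow> (a,b) \<in> ?Q \<or> (b,a) \<in> ?Q"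
      unfolding liftX_def using L(5) by blast
  qed
qed

lemma restrict_lin:
  assumes "linear_order_on A R" "B \<subseteq> A"
  shows "linear_order_on B (R \<inter> B \<times> B)"
proof -
  note L = lin_facts[OF assms(1)]
  show ?thesis
  proof (rule lin_intro)
    show "R \<inter> B \<times> B \<subseteq> B \<times> B" by blast
    show "\<And>a. a \<in> B \<Longrightarrow> (a,a) \<in> R \<inter> B \<times> B" using L(2) assms(2) by blast
    show "\<And>a b c. (a,b) \<in> R \<inter> B \<times> B \<Longrightarrow> (b,c) \<in> R \<inter> B \<times> B \<Longrightarrow> (a,c) \<in> R \<inter> B \<times> B"
      using L(3) by blast
    show "\<And>a b. (a,b) \<in> R \<inter> B \<times> B \<Longrightarrow> (b,a) \<in> R \<inter> B \<times> B \<Longrightarrow> a = b" using L(4) by blast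
    show "\<And>a b. a \<in> B \<Longrightarrow> b \<in> B \<Longrightarrow> (a,b) \<in> R \<inter> B \<times> B \<or> (b,a) \<in> R \<inter> B \<times> B"
      using L(5) assms(2) by blast
  qed
qed

lemma profiles_nonempty: "\<exists>P. P \<in> profiles V (A::'a set)"
proof -
  define r :: "'a rel" where "r = (SOME r. Well_order r \<and> Field r = UNIV)"
  have r0: "Well_order r \<and> Field r = UNIV"
    using someI_ex[OF well_ordering] unfolding r_def .
  note r = conjunct1[OF r0] conjunct2[OF r0]
  have "linear_order_on (Field r) r" using r(1) unfolding well_order_on_def by (rule conjunct1)
  hence "linear_order_on UNIV r" using r(2) by simp
  hence lo: "linear_order_on A (r \<inter> A \<times> A)" by (rule restrict_lin) (rule subset_UNIV)
  have "(\<lambda>i. if i \<in> V then r \<inter> A \<times> A else {}) \<in> profiles V A"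
    unfolding profiles_def using lo by simp
  thus ?thesis by blast
qed

lemma core:
  assumes lin: "linear_order_on A R" and A: "x \<in> A" "x' \<in> A" "y \<in> A" "y' \<in> A"
    and h1: "(x',x) \<in> R" and h2: "(y',y) \<in> R"
    and h3: "(best R {x,y}, best R {x',y'}) \<in> R"
    and h4: "(worst R {x,y}, worst R {x',y'}) \<in> R"
  shows "x = x'"
proof (rule ccontr)
  assume ne: "x \<noteq> x'"
  note L = lin_facts[OF lin]
  have nxx: "(x,x') \<notin> R" using ne h1 L(4) by blast
  note b1 = best_pair[OF lin A(1,3)] and b2 = best_pair[OF lin A(2,4)]
  note w1 = worst_pair[OF lin A(1,3)] and w2 = worst_pair[OF lin A(2,4)]
  show False
  proof (cases "(x,y) \<in> R")
    case True
    hence h3': "(x, best R {x',y'}) \<in> R" using h3 b1 by simp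
    show False
    proof (cases "(x',y') \<in> R")
      case True thus False using h3' b2 nxx by simp
    next
      case False
      hence "(y',x') \<in> R" using L(5) A by blast
      moreover have "(x,y') \<in> R" using h3' b2 False by simp
      ultimately show False using L(3) nxx by blast
    qed
  next
    case False
    hence h4': "(x, worst R {x',y'}) \<in> R" using h4 w1 by simp
    show False
    proof (cases "(x',y') \<in> R")
      case True
      hence "(x,y') \<in> R" using h4' w2 by simp
      thus False using h2 L(3) False by blast
    next
      case F2: False thus False using h4' w2 nxx by simp
    qed
  qed
qed

definition gX :: "'a set \<Rightarrow> (('v \<Rightarrow> 'a rel) \<Rightarrow> 'a set) \<Rightarrow> ('v \<Rightarrow> 'a rel) \<Rightarrow> 'a" where
  "gX X F P = the_elem (F P \<inter> X)"

lemma prof_lin: "P \<in> profiles V A \<Longrightarrow> i \<in> V \<Longrightarrow> linear_order_on A (P i)"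
  unfolding profiles_def by blast

lemma upd_prof: "P \<in> profiles V A \<Longrightarrow> i \<in> V \<Longrightarrow> linear_order_on A R \<Longrightarrow> P(i:=R) \<in> profiles V A"
  unfolding profiles_def by auto

locale bip =
  fixes V :: "'v set" and A :: "'a set" and F :: "('v \<Rightarrow> 'a rel) \<Rightarrow> 'a set" and X :: "'a set"
  assumes spp: "SPP V A F" and spo: "SPO V A F" and XA: "X \<subseteq> A"
    and split: "\<And>P. P \<in> profiles V A \<Longrightarrow> \<exists>x\<in>X. \<exists>y\<in>A-X. F P = {x,y}"
begin

abbreviation "g \<equiv> gX X F"

lemma g_eq: "F P = {x,y} \<Longrightarrow> x \<in> X \<Longrightarrow> y \<notin> X \<Longrightarrow> g P = x"
proof -
  assume "F P = {x,y}" "x \<in> X" "y \<notin> X"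
  hence "F P \<inter> X = {x}" by blast
  thus ?thesis unfolding gX_def by simp
qed

lemma obt:
  assumes "P \<in> profiles V A"
  obtains x y where "F P = {x,y}" "x \<in> X" "x \<in> A" "y \<in> A" "y \<notin> X" "g P = x"
  using split[OF assms] XA g_eq by blast

lemma spo_i: "P \<in> profiles V A \<Longrightarrow> i \<in> V \<Longrightarrow> linear_order_on A R \<Longrightarrow>
   (best (P i) (F P), best (P i) (F (P(i := R)))) \<in> P i"
  using spo unfolding SPO_def by blast

lemma spp_i: "P \<in> profiles V A \<Longrightarrow> i \<in> V \<Longrightarrow> linear_order_on A R \<Longrightarrow>
   (worst (P i) (F P), worst (P i) (F (P(i := R)))) \<in> P i"
  using spp unfolding SPP_def by blast

lemma L2:
  assumes P: "P \<in> profiles V A" and i: "i \<in> V" and lin2: "linear_order_on A Q2"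
    and top1: "\<And>a b. a \<in> X \<Longrightarrow> b \<in> A \<Longrightarrow> b \<notin> X \<Longrightarrow> (a,b) \<in> P i"
    and top2: "\<And>a b. a \<in> X \<Longrightarrow> b \<in> A \<Longrightarrow> b \<notin> X \<Longrightarrow> (a,b) \<in> Q2"
    and agree: "\<And>a b. a \<in> X \<Longrightarrow> b \<in> X \<Longrightarrow> (a,b) \<in> Q2 \<longleftrightarrow> (a,b) \<in> P i"
  shows "g (P(i:=Q2)) = g P"
proof -
  let ?P2 = "P(i:=Q2)"
  have P2: "?P2 \<in> profiles V A" using upd_prof[OF P i lin2] .
  have lin1: "linear_order_on A (P i)" using prof_lin[OF P i] .
  obtain x y where xy: "F P = {x,y}" "x \<in> X" "x \<in> A" "y \<in> A" "y \<notin> X" "g P = x" using obt[OF P] .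
  obtain x' y' where xy': "F ?P2 = {x',y'}" "x' \<in> X" "x' \<in> A" "y' \<in> A" "y' \<notin> X" "g ?P2 = x'"
    using obt[OF P2] .
  have "(best (P i) {x,y}, best (P i) {x',y'}) \<in> P i" using spo_i[OF P i lin2] xy xy' by simp
  hence 1: "(x,x') \<in> P i" using best_pair[OF lin1] xy xy' top1 by simp
  have bk: "?P2(i := P i) = P" by simp
  have "(best Q2 {x',y'}, best Q2 {x,y}) \<in> Q2" using spo_i[OF P2 i lin1] xy xy' bk by simp
  hence "(x',x) \<in> Q2" using best_pair[OF lin2] xy xy' top2 by simp
  hence 2: "(x',x) \<in> P i" using agree xy xy' by blast
  show ?thesis using 1 2 lin_facts(4)[OF lin1] xy xy' by simp
qed

lemma L1:
  assumes P: "P \<in> profiles V A" and i: "i \<in> V"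
  shows "g (P(i:=liftX X A (P i))) = g P"
proof -
  let ?R = "P i"
  let ?Q = "liftX X A ?R"
  let ?P2 = "P(i:=?Q)"
  have lin1: "linear_order_on A ?R" using prof_lin[OF P i] .
  have linQ: "linear_order_on A ?Q" using liftX_lin[OF lin1 XA] .
  have P2: "?P2 \<in> profiles V A" using upd_prof[OF P i linQ] .
  have topQ: "\<And>a b. a \<in> X \<Longrightarrow> b \<in> A \<Longrightarrow> b \<notin> X \<Longrightarrow> (a,b) \<in> ?Q" unfolding liftX_def by blast
  have agX: "\<And>a b. a \<in> X \<Longrightarrow> b \<in> X \<Longrightarrow> (a,b) \<in> ?Q \<longleftrightarrow> (a,b) \<in> ?R" unfolding liftX_def by blast
  have agY: "\<And>a b. a \<notin> X \<Longrightarrow> b \<notin> X \<Longrightarrow> (a,b) \<in> ?Q \<longleftrightarrow> (a,b) \<in> ?R" unfolding liftX_def by blast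
  obtain x y where xy: "F P = {x,y}" "x \<in> X" "x \<in> A" "y \<in> A" "y \<notin> X" "g P = x" using obt[OF P] .
  obtain x' y' where xy': "F ?P2 = {x',y'}" "x' \<in> X" "x' \<in> A" "y' \<in> A" "y' \<notin> X" "g ?P2 = x'"
    using obt[OF P2] .
  have bk: "?P2(i := P i) = P" by simp
  have "(best ?Q {x',y'}, best ?Q {x,y}) \<in> ?Q" using spo_i[OF P2 i lin1] xy xy' bk by simp
  hence "(x',x) \<in> ?Q" using best_pair[OF linQ] xy xy' topQ by simp
  hence h1: "(x',x) \<in> ?R" using agX xy xy' by blast
  have "(worst ?Q {x',y'}, worst ?Q {x,y}) \<in> ?Q" using spp_i[OF P2 i lin1] xy xy' bk by simp
  hence "(y',y) \<in> ?Q" using worst_pair[OF linQ] xy xy' topQ by simp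
  hence h2: "(y',y) \<in> ?R" using agY xy xy' by blast
  have h3: "(best ?R {x,y}, best ?R {x',y'}) \<in> ?R" using spo_i[OF P i linQ] xy xy' by simp
  have h4: "(worst ?R {x,y}, worst ?R {x',y'}) \<in> ?R" using spp_i[OF P i linQ] xy xy' by simp
  have "x = x'" using core[OF lin1 xy(3) xy'(3) xy(4) xy'(4) h1 h2 h3 h4] .
  thus ?thesis using xy xy' by simp
qed


lemma step:
  assumes P: "P \<in> profiles V A" and i: "i \<in> V" and linR: "linear_order_on A R'"
    and agree: "R' \<inter> X \<times> X = P i \<inter> X \<times> X"
  shows "g (P(i:=R')) = g P"
proof -
  let ?Q1 = "liftX X A (P i)"
  let ?P' = "P(i:=R')"
  let ?Q2 = "liftX X A R'"
  have lin1: "linear_order_on A (P i)" using prof_lin[OF P i] .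
  have linQ1: "linear_order_on A ?Q1" using liftX_lin[OF lin1 XA] .
  have linQ2: "linear_order_on A ?Q2" using liftX_lin[OF linR XA] .
  have P': "?P' \<in> profiles V A" using upd_prof[OF P i linR] .
  have a: "g (P(i:=?Q1)) = g P" using L1[OF P i] .
  have b: "g (?P'(i:=?Q2)) = g ?P'" using L1[OF P' i] by simp
  have P1: "P(i:=?Q1) \<in> profiles V A" using upd_prof[OF P i linQ1] .
  have c: "g ((P(i:=?Q1))(i:=?Q2)) = g (P(i:=?Q1))"
  proof (rule L2[OF P1 i linQ2])
    show "\<And>a b. a \<in> X \<Longrightarrow> b \<in> A \<Longrightarrow> b \<notin> X \<Longrightarrow> (a,b) \<in> (P(i:=?Q1)) i"
      unfolding liftX_def by simp
    show "\<And>a b. a \<in> X \<Longrightarrow> b \<in> A \<Longrightarrow> b \<notin> X \<Longrightarrow> (a,b) \<in> ?Q2"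
      unfolding liftX_def by simp
    show "\<And>a b. a \<in> X \<Longrightarrow> b \<in> X \<Longrightarrow> (a,b) \<in> ?Q2 \<longleftrightarrow> (a,b) \<in> (P(i:=?Q1)) i"
      using agree unfolding liftX_def by auto
  qed
  show ?thesis using a b c by simp
qed

lemma invariance:
  assumes P: "P \<in> profiles V A" and P': "P' \<in> profiles V A" and fin: "finite V"
    and eq: "restrict_profile P X = restrict_profile P' X"
  shows "g P' = g P"
proof -
  define H where "H S = (\<lambda>i. if i \<in> S then P' i else P i)" for S
  have ag: "\<And>i. P' i \<inter> X \<times> X = P i \<inter> X \<times> X"
    using eq unfolding restrict_profile_def by metis
  have "finite S \<Longrightarrow> S \<subseteq> V \<Longrightarrow> H S \<in> profiles V A \<and> g (H S) = g P" for S
  proof (induction S rule: finite_induct)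
    case empty thus ?case by (simp add: H_def P)
  next
    case (insert j S)
    hence j: "j \<in> V" and S: "S \<subseteq> V" by auto
    have IH: "H S \<in> profiles V A" "g (H S) = g P" using insert S by auto
    have HS: "H (insert j S) = (H S)(j := P' j)" unfolding H_def by (rule ext) simp
    have lin: "linear_order_on A (P' j)" using prof_lin[OF P' j] .
    have "P' j \<inter> X \<times> X = H S j \<inter> X \<times> X" using ag insert(2) unfolding H_def by simp
    hence "g ((H S)(j := P' j)) = g (H S)" using step[OF IH(1) j lin] by simp
    thus ?case unfolding HS using IH upd_prof[OF IH(1) j lin] by argo
  qed
  hence "g (H V) = g P" using fin by blast
  moreover have "H V = P'"
  proof
    fix i show "H V i = P' i"
      using P P' unfolding H_def profiles_def by auto
  qed
  ultimately show ?thesis by simp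
qed

end

lemma restrict_prof:
  assumes "P \<in> profiles V A" "B \<subseteq> A"
  shows "restrict_profile P B \<in> profiles V B"
proof -
  have "linear_order_on B (P i \<inter> B \<times> B)" if "i \<in> V" for i
    using restrict_lin[OF prof_lin[OF assms(1) that] assms(2)] .
  moreover have "P i \<inter> B \<times> B = {}" if "i \<notin> V" for i
    using assms(1) that unfolding profiles_def by simp
  ultimately show ?thesis unfolding profiles_def restrict_profile_def by simp
qed

lemma g_in:
  assumes "bip V A F X" "P \<in> profiles V A"
  shows "gX X F P \<in> X"
  by (metis assms bip.obt)

theorem corollary27:
  fixes V :: "'v set" and A :: "'a set" and F :: "('v \<Rightarrow> 'a rel) \<Rightarrow> 'a set"
  assumes "finite V" and "V \<noteq> {}" and "finite A"
    and "consular_rule V A F"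
    and "SPP V A F" and "SPO V A F"
  shows "reducible V A F \<longleftrightarrow> bipartite A (range_edges V A F)"
proof
  assume "reducible V A F"
  then obtain B C G H where BC: "B \<inter> C = {}" "B \<union> C = A"
    and G: "\<forall>P\<in>profiles V B. G P \<in> B" and H: "\<forall>P\<in>profiles V C. H P \<in> C"
    and FP: "\<forall>P\<in>profiles V A. F P = {G (restrict_profile P B), H (restrict_profile P C)}"
    unfolding reducible_def by blast
  show "bipartite A (range_edges V A F)"
    unfolding bipartite_def range_edges_def
  proof (intro exI conjI ballI)
    show "B \<inter> C = {}" "B \<union> C = A" by (fact BC)+
    fix e assume "e \<in> F ` profiles V A"
    then obtain P where P: "P \<in> profiles V A" "e = F P" by blast
    have "restrict_profile P B \<in> profiles V B" using restrict_prof[OF P(1)] BC by blast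
    moreover have "restrict_profile P C \<in> profiles V C" using restrict_prof[OF P(1)] BC by blast
    ultimately show "\<exists>x\<in>B. \<exists>y\<in>C. e = {x, y}" using G H FP P by blast
  qed
next
  assume "bipartite A (range_edges V A F)"
  then obtain X Y where XY: "X \<inter> Y = {}" "X \<union> Y = A"
    and E: "\<forall>e\<in>F ` profiles V A. \<exists>x\<in>X. \<exists>y\<in>Y. e = {x, y}"
    unfolding bipartite_def range_edges_def by blast
  have Y: "Y = A - X" using XY by blast
  have XA: "X \<subseteq> A" using XY by blast
  have splitX: "\<exists>x\<in>X. \<exists>y\<in>A-X. F P = {x,y}" if "P \<in> profiles V A" for P
    using E that Y by blast
  interpret bX: bip V A F X
    by unfold_locales (use assms XA splitX in auto)
  interpret bY: bip V A F "A - X"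
  proof unfold_locales
    fix P assume "P \<in> profiles V A"
    then obtain x y where "x \<in> X" "y \<in> A - X" "F P = {x,y}" using splitX by blast
    thus "\<exists>x\<in>A - X. \<exists>y\<in>A - (A - X). F P = {x, y}" using XA by blast
  qed (use assms in auto)
  obtain P0 where P0: "P0 \<in> profiles V A" using profiles_nonempty by blast
  define x0 where "x0 = gX X F P0"
  define y0 where "y0 = gX (A - X) F P0"
  have x0: "x0 \<in> X" unfolding x0_def using g_in[OF bX.bip_axioms P0] .
  have y0: "y0 \<in> A - X" unfolding y0_def using g_in[OF bY.bip_axioms P0] .
  define G where "G Q = (if \<exists>P. P \<in> profiles V A \<and> restrict_profile P X = Q
     then gX X F (SOME P. P \<in> profiles V A \<and> restrict_profile P X = Q) else x0)" for Q
  define H where "H Q = (if \<exists>P. P \<in> profiles V A \<and> restrict_profile P (A - X) = Q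
     then gX (A - X) F (SOME P. P \<in> profiles V A \<and> restrict_profile P (A - X) = Q) else y0)" for Q
  have GX: "G Q \<in> X" for Q
  proof (cases "\<exists>P. P \<in> profiles V A \<and> restrict_profile P X = Q")
    case True
    have "(SOME P. P \<in> profiles V A \<and> restrict_profile P X = Q) \<in> profiles V A"
      using conjunct1[OF someI_ex[OF True]] .
    thus ?thesis unfolding G_def using True g_in[OF bX.bip_axioms] by simp
  next
    case False show ?thesis unfolding G_def if_not_P[OF False] by (rule x0)
  qed
  have HY: "H Q \<in> A - X" for Q
  proof (cases "\<exists>P. P \<in> profiles V A \<and> restrict_profile P (A - X) = Q")
    case True
    have "(SOME P. P \<in> profiles V A \<and> restrict_profile P (A - X) = Q) \<in> profiles V A"
      using conjunct1[OF someI_ex[OF True]] .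
    thus ?thesis unfolding H_def using True g_in[OF bY.bip_axioms] by simp
  next
    case False show ?thesis unfolding H_def if_not_P[OF False] by (rule y0)
  qed
  have GP: "G (restrict_profile P X) = gX X F P" if P: "P \<in> profiles V A" for P
  proof -
    have ex: "\<exists>P'. P' \<in> profiles V A \<and> restrict_profile P' X = restrict_profile P X" using P by blast
    define P' where "P' = (SOME P'. P' \<in> profiles V A \<and> restrict_profile P' X = restrict_profile P X)"
    have P': "P' \<in> profiles V A \<and> restrict_profile P' X = restrict_profile P X"
      unfolding P'_def using someI_ex[OF ex] .
    have "gX X F P' = gX X F P" using bX.invariance[OF P conjunct1[OF P'] assms(1) conjunct2[OF P', symmetric]] .
    thus ?thesis unfolding G_def P'_def[symmetric] using ex by simp
  qed
  have HP: "H (restrict_profile P (A - X)) = gX (A - X) F P" if P: "P \<in> profiles V A" for P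
  proof -
    have ex: "\<exists>P'. P' \<in> profiles V A \<and> restrict_profile P' (A - X) = restrict_profile P (A - X)" using P by blast
    define P' where "P' = (SOME P'. P' \<in> profiles V A \<and> restrict_profile P' (A - X) = restrict_profile P (A - X))"
    have P': "P' \<in> profiles V A \<and> restrict_profile P' (A - X) = restrict_profile P (A - X)"
      unfolding P'_def using someI_ex[OF ex] .
    have "gX (A - X) F P' = gX (A - X) F P" using bY.invariance[OF P conjunct1[OF P'] assms(1) conjunct2[OF P', symmetric]] .
    thus ?thesis unfolding H_def P'_def[symmetric] using ex by simp
  qed
  show "reducible V A F"
    unfolding reducible_def
  proof (intro exI conjI ballI)
    show "X \<inter> (A - X) = {}" "X \<union> (A - X) = A" using XA by blast+
    show "\<And>P. G P \<in> X" by (fact GX)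
    show "\<And>P. H P \<in> A - X" by (fact HY)
    fix P assume P: "P \<in> profiles V A"
    obtain x y where xy: "F P = {x,y}" "x \<in> X" "y \<notin> X" "gX X F P = x" using bX.obt[OF P] by blast
    obtain y' where y': "y' \<in> A" "y' = y" using bY.obt[OF P] xy by blast
    have "F P = {y,x}" using xy(1) by blast
    moreover have "y \<in> A - X" using y' xy by blast
    moreover have "x \<notin> A - X" using xy by blast
    ultimately have "gX (A - X) F P = y" using bY.g_eq by blast
    thus "F P = {G (restrict_profile P X), H (restrict_profile P (A - X))}"
      using GP[OF P] HP[OF P] xy by simp
  qed
qed

end
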